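(* For $\alpha\in\mathbb{S}_m$ and $\beta\in\mathbb{S}_{m'}$ let $\alpha\#\beta\in\mathbb{S}_{m+m'}$ be the concatenation ($\alpha$ acting on $\{1,\dots,m\}$ and $\beta$ shifted to act on $\{m+1,\dots,m+m'\}$). Then the class of $\alpha\#\beta$ in $\mathcal{H}_{m+m'}$ depends only on the classes of $\alpha$ in $\mathcal{H}_m$ and $\beta$ in $\mathcal{H}_{m'}$; in particular it does not depend on the choice of hyper arc diagrams (cyclic shifts $\sigma_m^{-k}\alpha\sigma_m^k$, $\sigma_{m'}^{-l}\beta\sigma_{m'}^l$) representing the hyper chord diagrams. Hence concatenation induces a well-defined bilinear product $\mathcal{H}_m\otimes\mathcal{H}_{m'}\to\mathcal{H}_{m+m'}$.
   Context: $\sigma_m=(1,\dots,m)$. $\mathcal{H}_m=\mathbb{C}[\mathbb{S}_m]/\mathcal{V}_m$, where $\mathcal{V}_m$ is the span of all generalized Vassiliev elements in $\mathbb{C}[\mathbb{S}_m]$ ($\mathcal{H}_0=\mathcal{H}_1=\mathbb{C}$). Generalized Vassiliev elements: let $m\ge2$, $\gamma\in\mathbb{S}_{m-1}$, $q\in[m-1]\cup\{*\}$. For $t\in\{0,\dots,m-1\}$ let $\alpha_t\in\mathbb{S}_m$ be obtained by inserting a new point $x$ (free leg) into the line $1<\dots<m-1$ in the gap between $t$ and $t+1$, relabeling all points $1,\dots,m$ in order, letting the permutation act as $\gamma$ on old points except $q\mapsto x\mapsto\gamma(q)$ if $q\ne*$, and $x$ fixed if $q=*$. For a cycle $v$ of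 $\gamma$, $E(\gamma,q,v)=\sum_{j\in v}(\alpha_{j-1}-\alpha_j)$. *)

theory Defs
  imports Complex_Main "HOL-Combinatorics.Permutations"
begin

text \<open>Permutations in S_m are functions nat => nat permuting {1..m} (identity elsewhere).
  Elements of the group algebra C[S_m] are functions (nat => nat) => complex
  supported on S_m (finitely supported automatically).\<close>

definition galg :: "nat \<Rightarrow> ((nat \<Rightarrow> nat) \<Rightarrow> complex) set" where
  "galg m = {a. \<forall>\<pi>. a \<pi> \<noteq> 0 \<longrightarrow> \<pi> permutes {1..m}}"

definition delta :: "(nat \<Rightarrow> nat) \<Rightarrow> (nat \<Rightarrow> nat) \<Rightarrow> complex" where
  "delta \<alpha> = (\<lambda>\<pi>. if \<pi> = \<alpha> then 1 else 0)"

text \<open>Insertion of the free leg x into the gap between t and t+1 (x gets label t+1).\<close>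
definition ins_lbl :: "nat \<Rightarrow> nat \<Rightarrow> nat" where
  "ins_lbl t i = (if i \<le> t then i else i + 1)"

text \<open>alpha_t for gamma in S_(m-1), q in [m-1] (Some q) or * (None).\<close>
definition vas_alpha :: "nat \<Rightarrow> (nat \<Rightarrow> nat) \<Rightarrow> nat option \<Rightarrow> nat \<Rightarrow> nat \<Rightarrow> nat" where
  "vas_alpha m \<gamma> q t p =
     (if p < 1 \<or> m < p then p
      else if p = t + 1 then
        (case q of None \<Rightarrow> t + 1 | Some q' \<Rightarrow> ins_lbl t (\<gamma> q'))
      else (let r = (if p \<le> t then p else p - 1) in
            if q = Some r then t + 1 else ins_lbl t (\<gamma> r)))"

definition vas_elem :: "nat \<Rightarrow> (nat \<Rightarrow> nat) \<Rightarrow> nat option \<Rightarrow> nat set \<Rightarrow> (nat \<Rightarrow> nat) \<Rightarrow> complex" where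
  "vas_elem m \<gamma> q v =
     (\<lambda>\<pi>. \<Sum>j\<in>v. delta (vas_alpha m \<gamma> q (j - 1)) \<pi> - delta (vas_alpha m \<gamma> q j) \<pi>)"

definition gen_vassiliev :: "nat \<Rightarrow> ((nat \<Rightarrow> nat) \<Rightarrow> complex) set" where
  "gen_vassiliev m = {vas_elem m \<gamma> q v | \<gamma> q v.
      2 \<le> m \<and> \<gamma> permutes {1..m - 1} \<and>
      (case q of None \<Rightarrow> True | Some q' \<Rightarrow> q' \<in> {1..m - 1}) \<and>
      (\<exists>j0 \<in> {1..m - 1}. v = {(\<gamma> ^^ n) j0 | n. True})}"

inductive_set vspan :: "nat \<Rightarrow> ((nat \<Rightarrow> nat) \<Rightarrow> complex) set" for m where
  zero: "(\<lambda>_. 0) \<in> vspan m"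
| add: "a \<in> vspan m \<Longrightarrow> e \<in> gen_vassiliev m \<Longrightarrow> (\<lambda>\<pi>. a \<pi> + c * e \<pi>) \<in> vspan m"

text \<open>Equality of classes in H_m = C[S_m]/V_m.\<close>
definition hequiv :: "nat \<Rightarrow> ((nat \<Rightarrow> nat) \<Rightarrow> complex) \<Rightarrow> ((nat \<Rightarrow> nat) \<Rightarrow> complex) \<Rightarrow> bool" where
  "hequiv m a b \<longleftrightarrow> (\<lambda>\<pi>. a \<pi> - b \<pi>) \<in> vspan m"

definition conc :: "nat \<Rightarrow> (nat \<Rightarrow> nat) \<Rightarrow> (nat \<Rightarrow> nat) \<Rightarrow> nat \<Rightarrow> nat" where
  "conc m \<alpha> \<beta> = (\<lambda>i. if i \<le> m then \<alpha> i else \<beta> (i - m) + m)"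

definition cprod :: "nat \<Rightarrow> nat \<Rightarrow> ((nat \<Rightarrow> nat) \<Rightarrow> complex) \<Rightarrow> ((nat \<Rightarrow> nat) \<Rightarrow> complex)
                      \<Rightarrow> (nat \<Rightarrow> nat) \<Rightarrow> complex" where
  "cprod m m' a b = (\<lambda>\<pi>. \<Sum>\<alpha>\<in>{\<alpha>. \<alpha> permutes {1..m}}. \<Sum>\<beta>\<in>{\<beta>. \<beta> permutes {1..m'}}.
       if conc m \<alpha> \<beta> = \<pi> then a \<alpha> * b \<beta> else 0)"

definition sigma :: "nat \<Rightarrow> nat \<Rightarrow> nat" where
  "sigma m i = (if 1 \<le> i \<and> i < m then i + 1 else if i = m \<and> 0 < m then 1 else i)"

definition cshift :: "nat \<Rightarrow> nat \<Rightarrow> (nat \<Rightarrow> nat) \<Rightarrow> nat \<Rightarrow> nat" where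
  "cshift m k \<alpha> = (inv (sigma m) ^^ k) \<circ> \<alpha> \<circ> (sigma m ^^ k)"

end

theory Submission
  imports Defs "HOL-Combinatorics.Orbits"
begin

lemma perm_intro:
  assumes "finite S" "f ` S \<subseteq> S" "inj_on f S" "\<And>x. x \<notin> S \<Longrightarrow> f x = x"
  shows "f permutes S"
proof -
  have "f ` S = S" using endo_inj_surj assms by blast
  then show ?thesis by (intro bij_imp_permutes) (use assms in \<open>auto simp: bij_betw_def\<close>)
qed

lemma vspan_add: assumes "a \<in> vspan m" "b \<in> vspan m" shows "(\<lambda>\<pi>. a \<pi> + b \<pi>) \<in> vspan m"
  using assms(2) proof (induction b rule: vspan.induct)
  case zero then show ?case using assms(1) by simp
next
  case (add b e c)
  have "(\<lambda>\<pi>. (a \<pi> + b \<pi>) + c * e \<pi>) \<in> vspan m" using add by (intro vspan.add)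
  then show ?case by (simp add: add.assoc)
qed

lemma vspan_smult: "a \<in> vspan m \<Longrightarrow> (\<lambda>\<pi>. c * a \<pi>) \<in> vspan m"
proof (induction a rule: vspan.induct)
  case zero then show ?case using vspan.zero by simp
next
  case (add b e d)
  have "(\<lambda>\<pi>. c * b \<pi> + (c*d) * e \<pi>) \<in> vspan m" using add by (intro vspan.add)
  then show ?case by (simp add: algebra_simps)
qed

lemma vspan_gen: "e \<in> gen_vassiliev m \<Longrightarrow> e \<in> vspan m"
  using vspan.add[OF vspan.zero, of e m 1] by simp

lemma vspan_diff: "a \<in> vspan m \<Longrightarrow> b \<in> vspan m \<Longrightarrow> (\<lambda>\<pi>. a \<pi> - b \<pi>) \<in> vspan m"
  using vspan_add[of a m "\<lambda>\<pi>. (-1) * b \<pi>"] vspan_smult[of b m "-1"] by simp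

lemma vspan_sum: "finite S \<Longrightarrow> (\<And>i. i \<in> S \<Longrightarrow> f i \<in> vspan m) \<Longrightarrow> (\<lambda>\<pi>. \<Sum>i\<in>S. f i \<pi>) \<in> vspan m"
proof (induction S rule: finite_induct)
  case empty then show ?case using vspan.zero by simp
next
  case (insert x F)
  then show ?case using vspan_add[of "f x" m "\<lambda>\<pi>. \<Sum>i\<in>F. f i \<pi>"] by simp
qed

lemma vspan_lin:
  assumes fin: "finite A"
    and gen: "\<And>e. e \<in> gen_vassiliev m \<Longrightarrow> (\<lambda>\<pi>. \<Sum>x\<in>A. K x \<pi> * e x) \<in> vspan n"
    and d: "d \<in> vspan m"
  shows "(\<lambda>\<pi>. \<Sum>x\<in>A. K x \<pi> * d x) \<in> vspan n"
  using d
proof (induction d rule: vspan.induct)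
  case zero then show ?case using vspan.zero by simp
next
  case (add a e c)
  have "(\<lambda>\<pi>. (\<Sum>x\<in>A. K x \<pi> * a x) + c * (\<Sum>x\<in>A. K x \<pi> * e x)) \<in> vspan n"
    using add gen vspan_add vspan_smult by blast
  then show ?case by (simp add: algebra_simps sum.distrib sum_distrib_left)
qed

lemma conc_permutes:
  assumes a: "\<alpha> permutes {1..m}" and b: "\<beta> permutes {1..m'}"
  shows "conc m \<alpha> \<beta> permutes {1..m+m'}"
proof (rule perm_intro)
  have ai: "\<And>i. \<alpha> i \<in> {1..m} \<longleftrightarrow> i \<in> {1..m}" using permutes_in_image[OF a] by blast
  have bi: "\<And>i. \<beta> i \<in> {1..m'} \<longleftrightarrow> i \<in> {1..m'}" using permutes_in_image[OF b] by blast
  have ao: "\<And>i. i \<notin> {1..m} \<Longrightarrow> \<alpha> i = i" using a by (simp add: permutes_not_in)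
  have bo: "\<And>i. i \<notin> {1..m'} \<Longrightarrow> \<beta> i = i" using b by (simp add: permutes_not_in)
  have aj: "inj \<alpha>" "inj \<beta>" using a b permutes_inj by auto
  show "conc m \<alpha> \<beta> ` {1..m + m'} \<subseteq> {1..m + m'}"
  proof
    fix y assume "y \<in> conc m \<alpha> \<beta> ` {1..m + m'}"
    then obtain i where i: "i \<in> {1..m+m'}" "y = conc m \<alpha> \<beta> i" by auto
    show "y \<in> {1..m+m'}"
    proof (cases "i \<le> m")
      case True then show ?thesis using i ai[of i] by (auto simp: conc_def)
    next
      case False then show ?thesis using i bi[of "i-m"] by (auto simp: conc_def)
    qed
  qed
  show "inj_on (conc m \<alpha> \<beta>) {1..m + m'}"
  proof (rule inj_onI)
    fix x y assume x: "x \<in> {1..m+m'}" and y: "y \<in> {1..m+m'}" and e: "conc m \<alpha> \<beta> x = conc m \<alpha> \<beta> y"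
    show "x = y"
    proof (cases "x \<le> m"; cases "y \<le> m")
      assume "x \<le> m" "y \<le> m" then show ?thesis using e aj by (auto simp: conc_def inj_eq)
    next
      assume "x \<le> m" "\<not> y \<le> m" then show ?thesis using e x y ai[of x] bi[of "y-m"] by (auto simp: conc_def)
    next
      assume "\<not> x \<le> m" "y \<le> m" then show ?thesis using e x y ai[of y] bi[of "x-m"] by (auto simp: conc_def)
    next
      assume "\<not> x \<le> m" "\<not> y \<le> m"
      then have "\<beta> (x-m) = \<beta> (y-m)" using e by (auto simp: conc_def)
      then have "x - m = y - m" using aj by (auto simp: inj_eq)
      then show ?thesis using \<open>\<not> x \<le> m\<close> \<open>\<not> y \<le> m\<close> by simp
    qed
  qed
  show "\<And>x. x \<notin> {1..m + m'} \<Longrightarrow> conc m \<alpha> \<beta> x = x"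
  proof -
    fix x assume x: "x \<notin> {1..m + m'}"
    show "conc m \<alpha> \<beta> x = x"
    proof (cases "x \<le> m")
      case True then have "x = 0" using x by auto
      then show ?thesis using ao[of 0] by (simp add: conc_def)
    next
      case False
      then have "x - m \<notin> {1..m'}" using x by auto
      then show ?thesis using False bo[of "x-m"] by (auto simp: conc_def)
    qed
  qed
qed simp

lemma ins_lbl_inj: "ins_lbl t x = ins_lbl t y \<longleftrightarrow> x = y"
  by (auto simp: ins_lbl_def split: if_splits)

lemma ins_lbl_ne: "ins_lbl t x \<noteq> t + 1"
  by (auto simp: ins_lbl_def)

lemma ins_lbl_ne2: "t + 1 \<noteq> ins_lbl t x"
  by (auto simp: ins_lbl_def)

lemma va_ins:
  assumes "r \<in> {1..m-1}" "t \<le> m - 1"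
  shows "vas_alpha m \<gamma> q t (ins_lbl t r) = (if q = Some r then t+1 else ins_lbl t (\<gamma> r))"
  using assms by (auto simp: vas_alpha_def ins_lbl_def Let_def)

lemma va_t:
  assumes "t \<le> m - 1" "1 \<le> m"
  shows "vas_alpha m \<gamma> q t (t+1) = (case q of None \<Rightarrow> t+1 | Some q' \<Rightarrow> ins_lbl t (\<gamma> q'))"
  using assms by (auto simp: vas_alpha_def)

lemma ins_decomp:
  assumes "p \<in> {1..m}" "p \<noteq> t+1" "t \<le> m - 1"
  obtains r where "r \<in> {1..m-1}" "p = ins_lbl t r"
proof (cases "p \<le> t")
  case True then show ?thesis using assms that[of p] by (auto simp: ins_lbl_def)
next
  case False
  then have "p - 1 \<in> {1..m-1}" "p = ins_lbl t (p-1)" using assms by (auto simp: ins_lbl_def)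
  then show ?thesis by (rule that)
qed

lemma ins_range: "r \<in> {1..m-1} \<Longrightarrow> t \<le> m - 1 \<Longrightarrow> ins_lbl t r \<in> {1..m}"
  by (auto simp: ins_lbl_def)

lemma vas_alpha_permutes:
  assumes g: "\<gamma> permutes {1..m-1}" and q: "case q of None \<Rightarrow> True | Some q' \<Rightarrow> q' \<in> {1..m-1}"
    and t: "t \<le> m-1" and m: "1 \<le> m"
  shows "vas_alpha m \<gamma> q t permutes {1..m}"
proof (rule perm_intro)
  let ?f = "vas_alpha m \<gamma> q t"
  have gi: "\<And>i. \<gamma> i \<in> {1..m-1} \<longleftrightarrow> i \<in> {1..m-1}" using permutes_in_image[OF g] by blast
  have gj: "\<And>x y. \<gamma> x = \<gamma> y \<longleftrightarrow> x = y" using permutes_inj[OF g] by (auto simp: inj_eq)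
  have val: "\<And>p. p \<in> {1..m} \<Longrightarrow> ?f p \<in> {1..m}"
  proof -
    fix p assume p: "p \<in> {1..m}"
    show "?f p \<in> {1..m}"
    proof (cases "p = t+1")
      case True then show ?thesis using va_t[OF t m] q t m gi ins_range[OF _ t]
        by (auto split: option.splits)
    next
      case False
      then obtain r where r: "r \<in> {1..m-1}" "p = ins_lbl t r" using ins_decomp p t by blast
      then show ?thesis using va_ins[OF r(1) t] t m gi ins_range[OF _ t] by auto
    qed
  qed
  then show "?f ` {1..m} \<subseteq> {1..m}" by auto
  show "inj_on ?f {1..m}"
  proof (rule inj_onI)
    fix x y assume x: "x \<in> {1..m}" and y: "y \<in> {1..m}" and e: "?f x = ?f y"
    show "x = y"
    proof (cases "x = t+1"; cases "y = t+1")
      assume "x = t+1" "y = t+1" then show ?thesis by simp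
    next
      assume a: "x = t+1" "y \<noteq> t+1"
      then obtain s where s: "s \<in> {1..m-1}" "y = ins_lbl t s" using ins_decomp y t by blast
      have "(case q of None \<Rightarrow> t+1 | Some q' \<Rightarrow> ins_lbl t (\<gamma> q')) = (if q = Some s then t+1 else ins_lbl t (\<gamma> s))"
        using e a s va_t[OF t m] va_ins[OF s(1) t] by simp
      then show ?thesis using a s gj ins_lbl_inj ins_lbl_ne ins_lbl_ne2
        by (auto split: option.splits if_splits)
    next
      assume a: "x \<noteq> t+1" "y = t+1"
      then obtain s where s: "s \<in> {1..m-1}" "x = ins_lbl t s" using ins_decomp x t by blast
      have "(case q of None \<Rightarrow> t+1 | Some q' \<Rightarrow> ins_lbl t (\<gamma> q')) = (if q = Some s then t+1 else ins_lbl t (\<gamma> s))"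
        using e a s va_t[OF t m] va_ins[OF s(1) t] by simp
      then show ?thesis using a s gj ins_lbl_inj ins_lbl_ne ins_lbl_ne2
        by (auto split: option.splits if_splits)
    next
      assume a: "x \<noteq> t+1" "y \<noteq> t+1"
      then obtain s where s: "s \<in> {1..m-1}" "x = ins_lbl t s" using ins_decomp x t by blast
      obtain r where r: "r \<in> {1..m-1}" "y = ins_lbl t r" using ins_decomp y t a by blast
      have "(if q = Some s then t+1 else ins_lbl t (\<gamma> s)) = (if q = Some r then t+1 else ins_lbl t (\<gamma> r))"
        using e a s r va_ins[OF s(1) t] va_ins[OF r(1) t] by simp
      then show ?thesis using a s r gj ins_lbl_inj ins_lbl_ne ins_lbl_ne2
        by (auto split: option.splits if_splits)
    qed
  qed
  show "\<And>x. x \<notin> {1..m} \<Longrightarrow> ?f x = x" by (auto simp: vas_alpha_def)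
qed simp


lemma sum_delta_pick: "finite A \<Longrightarrow> a \<in> A \<Longrightarrow> (\<Sum>x\<in>A. f x * delta a x) = f a"
  by (simp add: delta_def if_distrib[of "\<lambda>y. f _ * y"] sum.delta' cong: if_cong)

lemma va_conc_left:
  assumes b: "\<beta> permutes {1..m'}" and q: "case q of None \<Rightarrow> True | Some q' \<Rightarrow> q' \<in> {1..m-1}"
    and t: "t \<le> m - 1" and m: "1 \<le> m"
  shows "vas_alpha (m+m') (conc (m-1) \<gamma> \<beta>) q t = conc m (vas_alpha m \<gamma> q t) \<beta>"
proof
  fix p
  have bi: "\<And>i. \<beta> i \<in> {1..m'} \<longleftrightarrow> i \<in> {1..m'}" using permutes_in_image[OF b] by blast
  have bo: "\<And>i. i \<notin> {1..m'} \<Longrightarrow> \<beta> i = i" using b by (simp add: permutes_not_in)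
  let ?G = "conc (m-1) \<gamma> \<beta>"
  have t': "t \<le> m + m' - 1" using t by simp
  show "vas_alpha (m+m') ?G q t p = conc m (vas_alpha m \<gamma> q t) \<beta> p"
  proof (cases "p \<in> {1..m+m'}")
    case False
    then have "p = 0 \<or> p > m + m'" by auto
    then show ?thesis
    proof
      assume "p = 0" then show ?thesis by (simp add: vas_alpha_def conc_def)
    next
      assume p: "p > m + m'"
      then have "p - m \<notin> {1..m'}" by auto
      then have "\<beta> (p - m) = p - m" using bo by blast
      then show ?thesis using p by (simp add: vas_alpha_def conc_def)
    qed
  next
    case True
    show ?thesis
    proof (cases "p = t + 1")
      case pt: True
      have "vas_alpha (m+m') ?G q t p = (case q of None \<Rightarrow> t+1 | Some q' \<Rightarrow> ins_lbl t (?G q'))"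
        unfolding pt by (rule va_t[OF t']) (use m in simp)
      also have "\<dots> = (case q of None \<Rightarrow> t+1 | Some q' \<Rightarrow> ins_lbl t (\<gamma> q'))"
        using q by (auto simp: conc_def split: option.splits)
      also have "\<dots> = vas_alpha m \<gamma> q t p" using va_t[OF t m] pt by simp
      also have "\<dots> = conc m (vas_alpha m \<gamma> q t) \<beta> p"
        using pt t m by (auto simp: conc_def)
      finally show ?thesis .
    next
      case pt: False
      then obtain r where r: "r \<in> {1..m+m'-1}" "p = ins_lbl t r" using ins_decomp[OF True pt t'] by blast
      have L: "vas_alpha (m+m') ?G q t p = (if q = Some r then t+1 else ins_lbl t (?G r))"
        using va_ins[OF r(1) t'] r(2) by simp
      show ?thesis
      proof (cases "r \<le> m - 1")
        case rs: True
        then have r1: "r \<in> {1..m-1}" using r by auto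
        have "p \<le> m" using r(2) rs t by (auto simp: ins_lbl_def)
        then have "conc m (vas_alpha m \<gamma> q t) \<beta> p = vas_alpha m \<gamma> q t p" by (simp add: conc_def)
        also have "\<dots> = (if q = Some r then t+1 else ins_lbl t (\<gamma> r))"
          using va_ins[OF r1 t] r(2) by simp
        finally show ?thesis using L rs by (simp add: conc_def)
      next
        case rs: False
        then have qr: "q \<noteq> Some r" using q by (auto split: option.splits)
        have pe: "p = r + 1" using r(2) rs t by (auto simp: ins_lbl_def)
        have "r - (m - 1) \<in> {1..m'}" using rs r m by auto
        then have bv: "\<beta> (r - (m-1)) \<in> {1..m'}" using bi by blast
        have G: "?G r = \<beta> (r - (m-1)) + (m - 1)" using rs by (simp add: conc_def)
        have "ins_lbl t (?G r) = \<beta> (r - (m-1)) + m" using G bv t m by (auto simp: ins_lbl_def)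
        moreover have "conc m (vas_alpha m \<gamma> q t) \<beta> p = \<beta> (r - (m-1)) + m"
          using pe rs m by (auto simp: conc_def)
        ultimately show ?thesis using L qr by simp
      qed
    qed
  qed
qed

lemma ins_lbl_shift: "ins_lbl (t + m) (y + m) = ins_lbl t y + m"
  by (simp add: ins_lbl_def)

lemma va_conc_right:
  assumes a: "\<alpha> permutes {1..m}" and q: "case q of None \<Rightarrow> True | Some q' \<Rightarrow> q' \<in> {1..m'-1}"
    and t: "t \<le> m' - 1" and m': "1 \<le> m'"
  shows "vas_alpha (m+m') (conc m \<alpha> \<gamma>) (map_option (\<lambda>x. x + m) q) (t + m) = conc m \<alpha> (vas_alpha m' \<gamma> q t)"
proof
  fix p
  have ai: "\<And>i. \<alpha> i \<in> {1..m} \<longleftrightarrow> i \<in> {1..m}" using permutes_in_image[OF a] by blast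
  have a0: "\<alpha> 0 = 0" using a by (simp add: permutes_not_in)
  let ?G = "conc m \<alpha> \<gamma>"
  let ?Q = "map_option (\<lambda>x. x + m) q"
  have t': "t + m \<le> m + m' - 1" using t m' by simp
  have one: "1 \<le> m + m'" using m' by simp
  show "vas_alpha (m+m') ?G ?Q (t + m) p = conc m \<alpha> (vas_alpha m' \<gamma> q t) p"
  proof (cases "p \<in> {1..m+m'}")
    case False
    then have "p = 0 \<or> p > m + m'" by auto
    then show ?thesis
    proof
      assume "p = 0" then show ?thesis using a0 by (simp add: vas_alpha_def conc_def)
    next
      assume p: "p > m + m'"
      then show ?thesis by (auto simp: vas_alpha_def conc_def)
    qed
  next
    case True
    show ?thesis
    proof (cases "p = t + m + 1")
      case pt: True
      have "vas_alpha (m+m') ?G ?Q (t+m) p = (case ?Q of None \<Rightarrow> t+m+1 | Some q' \<Rightarrow> ins_lbl (t+m) (?G q'))"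
        unfolding pt by (rule va_t[OF t' one])
      also have "\<dots> = (case q of None \<Rightarrow> t+1 | Some q' \<Rightarrow> ins_lbl t (\<gamma> q')) + m"
        using q by (auto simp: conc_def ins_lbl_shift[symmetric] split: option.splits)
      also have "\<dots> = vas_alpha m' \<gamma> q t (t+1) + m" using va_t[OF t m'] by simp
      also have "\<dots> = conc m \<alpha> (vas_alpha m' \<gamma> q t) p"
        using pt by (auto simp: conc_def)
      finally show ?thesis .
    next
      case pt: False
      then obtain r where r: "r \<in> {1..m+m'-1}" "p = ins_lbl (t+m) r" using ins_decomp[OF True pt t'] by blast
      have L: "vas_alpha (m+m') ?G ?Q (t+m) p = (if ?Q = Some r then t+m+1 else ins_lbl (t+m) (?G r))"
        using va_ins[OF r(1) t'] r(2) by simp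
      show ?thesis
      proof (cases "r \<le> m")
        case rs: True
        then have qr: "?Q \<noteq> Some r" using q by (auto split: option.splits)
        have pe: "p = r" using r(2) rs by (auto simp: ins_lbl_def)
        have ar: "\<alpha> r \<in> {1..m}" using ai rs r by auto
        have "ins_lbl (t+m) (?G r) = \<alpha> r" using rs ar by (auto simp: conc_def ins_lbl_def)
        moreover have "conc m \<alpha> (vas_alpha m' \<gamma> q t) p = \<alpha> r" using pe rs by (simp add: conc_def)
        ultimately show ?thesis using L qr by auto
      next
        case rs: False
        define s where "s = r - m"
        have rs': "r = s + m" using rs s_def by simp
        have s1: "s \<in> {1..m'-1}" using rs r s_def by auto
        have pe: "p = ins_lbl t s + m" using r(2) rs' ins_lbl_shift by simp
        have "conc m \<alpha> (vas_alpha m' \<gamma> q t) p = vas_alpha m' \<gamma> q t (ins_lbl t s) + m"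
        proof -
          have "ins_lbl t s \<ge> 1" using s1 by (auto simp: ins_lbl_def)
          then have "\<not> p \<le> m" "p - m = ins_lbl t s" using pe by auto
          then show ?thesis by (simp add: conc_def)
        qed
        also have "\<dots> = (if q = Some s then t+1 else ins_lbl t (\<gamma> s)) + m"
          using va_ins[OF s1 t] by simp
        also have "\<dots> = (if ?Q = Some r then t+m+1 else ins_lbl (t+m) (?G r))"
          using rs' rs by (auto simp: conc_def ins_lbl_shift[symmetric])
        finally show ?thesis using L by simp
      qed
    qed
  qed
qed

lemma conc_funpow_left:
  assumes g: "\<gamma> permutes {1..k}" and j: "j \<in> {1..k}"
  shows "(conc k \<gamma> \<beta> ^^ n) j = (\<gamma> ^^ n) j"
proof (induction n)
  case 0 then show ?case by simp
next
  case (Suc n)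
  have "(\<gamma> ^^ n) j \<in> {1..k}" using permutes_in_funpow_image[OF g j] .
  then show ?case using Suc by (simp add: conc_def)
qed

lemma conc_funpow_right:
  assumes g: "\<gamma> permutes {1..k}" and j: "j \<in> {1..k}"
  shows "(conc m \<alpha> \<gamma> ^^ n) (j + m) = (\<gamma> ^^ n) j + m"
proof (induction n)
  case 0 then show ?case by simp
next
  case (Suc n)
  have "(\<gamma> ^^ n) j \<in> {1..k}" using permutes_in_funpow_image[OF g j] .
  then show ?case using Suc by (simp add: conc_def)
qed

lemma gen_elim:
  assumes "e \<in> gen_vassiliev m"
  obtains \<gamma> q v j0 where "e = vas_elem m \<gamma> q v" "2 \<le> m" "\<gamma> permutes {1..m - 1}"
    "case q of None \<Rightarrow> True | Some q' \<Rightarrow> q' \<in> {1..m - 1}"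
    "j0 \<in> {1..m - 1}" "v = {(\<gamma> ^^ n) j0 | n. True}"
  using assms unfolding gen_vassiliev_def by blast

lemma gen_intro:
  assumes "2 \<le> m" "\<gamma> permutes {1..m - 1}"
    "case q of None \<Rightarrow> True | Some q' \<Rightarrow> q' \<in> {1..m - 1}"
    "j0 \<in> {1..m - 1}" "v = {(\<gamma> ^^ n) j0 | n. True}"
  shows "vas_elem m \<gamma> q v \<in> gen_vassiliev m"
  using assms unfolding gen_vassiliev_def by blast

lemma left_gen:
  assumes e: "e \<in> gen_vassiliev m" and b: "\<beta> permutes {1..m'}"
  shows "(\<lambda>\<pi>. \<Sum>\<alpha>\<in>{\<alpha>. \<alpha> permutes {1..m}}. (if conc m \<alpha> \<beta> = \<pi> then 1 else 0) * e \<alpha>) \<in> gen_vassiliev (m+m')"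
proof -
  obtain \<gamma> q v j0 where ev: "e = vas_elem m \<gamma> q v" and m2: "2 \<le> m" and g: "\<gamma> permutes {1..m - 1}"
    and q: "case q of None \<Rightarrow> True | Some q' \<Rightarrow> q' \<in> {1..m - 1}"
    and j0: "j0 \<in> {1..m - 1}" and v: "v = {(\<gamma> ^^ n) j0 | n. True}"
    using gen_elim[OF e] by blast
  have vsub: "v \<subseteq> {1..m-1}" using v permutes_in_funpow_image[OF g j0] by auto
  have fv: "finite v" using vsub finite_subset by blast
  let ?P = "{\<alpha>. \<alpha> permutes {1..m}}"
  have fP: "finite ?P" by (rule finite_permutations) simp
  let ?A = "vas_alpha m \<gamma> q"
  let ?G = "conc (m-1) \<gamma> \<beta>"
  have AP: "?A t \<in> ?P" if "t \<le> m - 1" for t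
    using vas_alpha_permutes[OF g q that] m2 by simp
  have eq: "(\<Sum>\<alpha>\<in>?P. (if conc m \<alpha> \<beta> = \<pi> then 1 else 0) * e \<alpha>) = vas_elem (m+m') ?G q v \<pi>" for \<pi>
  proof -
    let ?c = "\<lambda>\<alpha>. (if conc m \<alpha> \<beta> = \<pi> then 1 else 0 :: complex)"
    have "(\<Sum>\<alpha>\<in>?P. ?c \<alpha> * e \<alpha>) = (\<Sum>\<alpha>\<in>?P. \<Sum>j\<in>v. ?c \<alpha> * delta (?A (j-1)) \<alpha> - ?c \<alpha> * delta (?A j) \<alpha>)"
      by (simp add: ev vas_elem_def sum_distrib_left right_diff_distrib)
    also have "\<dots> = (\<Sum>j\<in>v. \<Sum>\<alpha>\<in>?P. ?c \<alpha> * delta (?A (j-1)) \<alpha> - ?c \<alpha> * delta (?A j) \<alpha>)"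
      by (rule sum.swap)
    also have "\<dots> = (\<Sum>j\<in>v. ?c (?A (j-1)) - ?c (?A j))"
    proof (rule sum.cong[OF refl])
      fix j assume "j \<in> v"
      then have "j \<in> {1..m-1}" using vsub by blast
      then have j: "j - 1 \<le> m - 1" "j \<le> m - 1" by auto
      show "(\<Sum>\<alpha>\<in>?P. ?c \<alpha> * delta (?A (j-1)) \<alpha> - ?c \<alpha> * delta (?A j) \<alpha>) = ?c (?A (j-1)) - ?c (?A j)"
        by (simp only: sum_subtractf sum_delta_pick[OF fP AP[OF j(1)]] sum_delta_pick[OF fP AP[OF j(2)]])
    qed
    also have "\<dots> = vas_elem (m+m') ?G q v \<pi>"
      unfolding vas_elem_def
    proof (rule sum.cong[OF refl])
      fix j assume "j \<in> v"
      then have "j \<in> {1..m-1}" using vsub by blast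
      then have j: "j - 1 \<le> m - 1" "j \<le> m - 1" by auto
      have m1: "1 \<le> m" using m2 by simp
      show "?c (?A (j-1)) - ?c (?A j) = delta (vas_alpha (m + m') ?G q (j - 1)) \<pi> - delta (vas_alpha (m + m') ?G q j) \<pi>"
        using va_conc_left[OF b q j(1) m1] va_conc_left[OF b q j(2) m1] by (auto simp: delta_def)
    qed
    finally show ?thesis .
  qed
  have "vas_elem (m+m') ?G q v \<in> gen_vassiliev (m+m')"
  proof (rule gen_intro)
    show "2 \<le> m + m'" using m2 by simp
    show "?G permutes {1..m + m' - 1}" using conc_permutes[OF g b] m2 by (simp add: add.commute)
    show "case q of None \<Rightarrow> True | Some q' \<Rightarrow> q' \<in> {1..m + m' - 1}" using q by (auto split: option.splits)
    show "j0 \<in> {1..m + m' - 1}" using j0 by auto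
    show "v = {(?G ^^ n) j0 | n. True}" using v conc_funpow_left[OF g j0] by simp
  qed
  then show ?thesis using eq by simp
qed

lemma right_gen:
  assumes e: "e \<in> gen_vassiliev m'" and a: "\<alpha> permutes {1..m}"
  shows "(\<lambda>\<pi>. \<Sum>\<beta>\<in>{\<beta>. \<beta> permutes {1..m'}}. (if conc m \<alpha> \<beta> = \<pi> then 1 else 0) * e \<beta>) \<in> gen_vassiliev (m+m')"
proof -
  obtain \<gamma> q v j0 where ev: "e = vas_elem m' \<gamma> q v" and m2: "2 \<le> m'" and g: "\<gamma> permutes {1..m' - 1}"
    and q: "case q of None \<Rightarrow> True | Some q' \<Rightarrow> q' \<in> {1..m' - 1}"
    and j0: "j0 \<in> {1..m' - 1}" and v: "v = {(\<gamma> ^^ n) j0 | n. True}"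
    using gen_elim[OF e] by blast
  have vsub: "v \<subseteq> {1..m'-1}" using v permutes_in_funpow_image[OF g j0] by auto
  have fv: "finite v" using vsub finite_subset by blast
  let ?P = "{\<beta>. \<beta> permutes {1..m'}}"
  have fP: "finite ?P" by (rule finite_permutations) simp
  let ?A = "vas_alpha m' \<gamma> q"
  let ?G = "conc m \<alpha> \<gamma>"
  let ?Q = "map_option (\<lambda>x. x + m) q"
  let ?V = "(\<lambda>j. j + m) ` v"
  have AP: "?A t \<in> ?P" if "t \<le> m' - 1" for t
    using vas_alpha_permutes[OF g q that] m2 by simp
  have m1: "1 \<le> m'" using m2 by simp
  have eq: "(\<Sum>\<beta>\<in>?P. (if conc m \<alpha> \<beta> = \<pi> then 1 else 0) * e \<beta>) = vas_elem (m+m') ?G ?Q ?V \<pi>" for \<pi>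
  proof -
    let ?c = "\<lambda>\<beta>. (if conc m \<alpha> \<beta> = \<pi> then 1 else 0 :: complex)"
    have "(\<Sum>\<beta>\<in>?P. ?c \<beta> * e \<beta>) = (\<Sum>\<beta>\<in>?P. \<Sum>j\<in>v. ?c \<beta> * delta (?A (j-1)) \<beta> - ?c \<beta> * delta (?A j) \<beta>)"
      by (simp add: ev vas_elem_def sum_distrib_left right_diff_distrib)
    also have "\<dots> = (\<Sum>j\<in>v. \<Sum>\<beta>\<in>?P. ?c \<beta> * delta (?A (j-1)) \<beta> - ?c \<beta> * delta (?A j) \<beta>)"
      by (rule sum.swap)
    also have "\<dots> = (\<Sum>j\<in>v. ?c (?A (j-1)) - ?c (?A j))"
    proof (rule sum.cong[OF refl])
      fix j assume "j \<in> v"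
      then have "j \<in> {1..m'-1}" using vsub by blast
      then have j: "j - 1 \<le> m' - 1" "j \<le> m' - 1" by auto
      show "(\<Sum>\<beta>\<in>?P. ?c \<beta> * delta (?A (j-1)) \<beta> - ?c \<beta> * delta (?A j) \<beta>) = ?c (?A (j-1)) - ?c (?A j)"
        by (simp only: sum_subtractf sum_delta_pick[OF fP AP[OF j(1)]] sum_delta_pick[OF fP AP[OF j(2)]])
    qed
    also have "\<dots> = (\<Sum>j\<in>v. delta (vas_alpha (m + m') ?G ?Q (j + m - 1)) \<pi> - delta (vas_alpha (m + m') ?G ?Q (j + m)) \<pi>)"
    proof (rule sum.cong[OF refl])
      fix j assume "j \<in> v"
      then have jj: "j \<in> {1..m'-1}" using vsub by blast
      then have j: "j - 1 \<le> m' - 1" "j \<le> m' - 1" by auto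
      have jm: "j + m - 1 = (j - 1) + m" using jj by auto
      show "?c (?A (j-1)) - ?c (?A j) = delta (vas_alpha (m + m') ?G ?Q (j + m - 1)) \<pi> - delta (vas_alpha (m + m') ?G ?Q (j + m)) \<pi>"
        unfolding jm using va_conc_right[OF a q j(1) m1] va_conc_right[OF a q j(2) m1] by (auto simp: delta_def)
    qed
    also have "\<dots> = vas_elem (m+m') ?G ?Q ?V \<pi>"
      unfolding vas_elem_def by (subst sum.reindex) (auto simp: inj_on_def)
    finally show ?thesis .
  qed
  have "vas_elem (m+m') ?G ?Q ?V \<in> gen_vassiliev (m+m')"
  proof (rule gen_intro)
    show "2 \<le> m + m'" using m2 by simp
    show "?G permutes {1..m + m' - 1}" using conc_permutes[OF a g] m2 by simp
    show "case ?Q of None \<Rightarrow> True | Some q' \<Rightarrow> q' \<in> {1..m + m' - 1}" using q m2 by (auto split: option.splits)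
    show "j0 + m \<in> {1..m + m' - 1}" using j0 by auto
    show "?V = {(?G ^^ n) (j0 + m) | n. True}" using v conc_funpow_right[OF g j0] by auto
  qed
  then show ?thesis using eq by simp
qed

lemma orbit_partition_sum:
  assumes g: "\<gamma> permutes S" and fS: "finite S"
  shows "(\<Sum>v\<in>(\<lambda>j. {(\<gamma> ^^ n) j | n. True}) ` S. \<Sum>x\<in>v. f x) = (\<Sum>x\<in>S. f x)"
proof -
  have pg: "permutation \<gamma>" using permutes_imp_permutation[OF fS g] .
  have C: "\<And>j. {(\<gamma> ^^ n) j | n. True} = orbit \<gamma> j" using orbit_altdef_permutation[OF pg] by simp
  have CF: "(\<lambda>j. {(\<gamma> ^^ n) j | n. True}) = orbit \<gamma>" by (rule ext) (rule C)
  let ?O = "orbit \<gamma> ` S"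
  have sub: "orbit \<gamma> j \<subseteq> S" if j: "j \<in> S" for j
  proof
    fix x assume "x \<in> orbit \<gamma> j"
    then obtain n where "x = (\<gamma> ^^ n) j" unfolding C[symmetric] by blast
    then show "x \<in> S" using permutes_in_funpow_image[OF g j] by simp
  qed
  have self: "j \<in> orbit \<gamma> j" for j using permutation_self_in_orbit[OF pg] .
  have same: "orbit \<gamma> y = orbit \<gamma> j" if yj: "y \<in> orbit \<gamma> j" for y j
  proof
    show "orbit \<gamma> y \<subseteq> orbit \<gamma> j"
    proof
      fix z assume "z \<in> orbit \<gamma> y" then show "z \<in> orbit \<gamma> j" by (rule orbit_trans[OF _ yj])
    qed
    have jy: "j \<in> orbit \<gamma> y" using orbit_swap[OF self yj] .
    show "orbit \<gamma> j \<subseteq> orbit \<gamma> y"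
    proof
      fix z assume "z \<in> orbit \<gamma> j" then show "z \<in> orbit \<gamma> y" by (rule orbit_trans[OF _ jy])
    qed
  qed
  have U: "\<Union>?O = S"
  proof
    show "\<Union>?O \<subseteq> S" using sub by (simp add: UN_least)
    show "S \<subseteq> \<Union>?O"
    proof
      fix x assume "x \<in> S" then show "x \<in> \<Union>?O" using self[of x] by (intro UnionI[of "orbit \<gamma> x"]) auto
    qed
  qed
  have fin: "\<forall>A\<in>?O. finite A"
  proof
    fix A assume "A \<in> ?O"
    then obtain j where "j \<in> S" "A = orbit \<gamma> j" by blast
    then show "finite A" using finite_subset[OF sub fS] by simp
  qed
  have dis: "\<forall>A\<in>?O. \<forall>B\<in>?O. A \<noteq> B \<longrightarrow> A \<inter> B = {}"
  proof (intro ballI impI)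
    fix A B assume "A \<in> ?O" "B \<in> ?O" "A \<noteq> B"
    then obtain a b where ab: "A = orbit \<gamma> a" "B = orbit \<gamma> b" by blast
    show "A \<inter> B = {}"
    proof (rule ccontr)
      assume "A \<inter> B \<noteq> {}"
      then obtain y where y: "y \<in> orbit \<gamma> a" "y \<in> orbit \<gamma> b" using ab by blast
      have "orbit \<gamma> a = orbit \<gamma> b" using same[OF y(1)] same[OF y(2)] by simp
      then show False using ab \<open>A \<noteq> B\<close> by simp
    qed
  qed
  have "(\<Sum>x\<in>S. f x) = sum f (\<Union>?O)" using U by simp
  also have "\<dots> = (\<Sum>v\<in>?O. sum f v)" using sum.Union_disjoint[OF fin dis] by simp
  finally show ?thesis unfolding CF by simp
qed

lemma telescope: "(\<Sum>j\<in>{1..n::nat}. F (j - 1) - F j) = F 0 - (F n :: complex)"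
  by (induction n) (simp_all add: atLeastAtMostSuc_conv)

lemma cprod_alt: "cprod m m' a b \<pi> = (\<Sum>\<alpha>\<in>{\<alpha>. \<alpha> permutes {1..m}}. \<Sum>\<beta>\<in>{\<beta>. \<beta> permutes {1..m'}}.
   (if conc m \<alpha> \<beta> = \<pi> then 1 else 0) * a \<alpha> * b \<beta>)"
  unfolding cprod_def by (intro sum.cong refl) simp

lemma cprod_left_vspan:
  assumes d: "d \<in> vspan m"
  shows "cprod m m' d b \<in> vspan (m+m')"
proof -
  let ?P = "{\<alpha>. \<alpha> permutes {1..m}}"
  let ?P' = "{\<beta>. \<beta> permutes {1..m'}}"
  have fP: "finite ?P" "finite ?P'" by (rule finite_permutations, simp)+
  have inner: "(\<lambda>\<pi>. \<Sum>\<alpha>\<in>?P. (if conc m \<alpha> \<beta> = \<pi> then 1 else 0) * d \<alpha>) \<in> vspan (m+m')" if "\<beta> \<in> ?P'" for \<beta>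
    by (rule vspan_lin[OF fP(1) _ d]) (use left_gen that vspan_gen in blast)
  have "(\<lambda>\<pi>. \<Sum>\<beta>\<in>?P'. b \<beta> * (\<Sum>\<alpha>\<in>?P. (if conc m \<alpha> \<beta> = \<pi> then 1 else 0) * d \<alpha>)) \<in> vspan (m+m')"
    by (rule vspan_sum[OF fP(2)], rule vspan_smult, rule inner)
  moreover have "cprod m m' d b = (\<lambda>\<pi>. \<Sum>\<beta>\<in>?P'. b \<beta> * (\<Sum>\<alpha>\<in>?P. (if conc m \<alpha> \<beta> = \<pi> then 1 else 0) * d \<alpha>))"
  proof
    fix \<pi>
    have "cprod m m' d b \<pi> = (\<Sum>\<beta>\<in>?P'. \<Sum>\<alpha>\<in>?P. (if conc m \<alpha> \<beta> = \<pi> then 1 else 0) * d \<alpha> * b \<beta>)"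
      unfolding cprod_alt by (rule sum.swap)
    also have "\<dots> = (\<Sum>\<beta>\<in>?P'. b \<beta> * (\<Sum>\<alpha>\<in>?P. (if conc m \<alpha> \<beta> = \<pi> then 1 else 0) * d \<alpha>))"
      unfolding sum_distrib_left by (intro sum.cong refl) (simp add: ac_simps)
    finally show "cprod m m' d b \<pi> = (\<Sum>\<beta>\<in>?P'. b \<beta> * (\<Sum>\<alpha>\<in>?P. (if conc m \<alpha> \<beta> = \<pi> then 1 else 0) * d \<alpha>))" .
  qed
  ultimately show ?thesis by simp
qed

lemma cprod_right_vspan:
  assumes d: "d \<in> vspan m'"
  shows "cprod m m' a d \<in> vspan (m+m')"
proof -
  let ?P = "{\<alpha>. \<alpha> permutes {1..m}}"
  let ?P' = "{\<beta>. \<beta> permutes {1..m'}}"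
  have fP: "finite ?P" "finite ?P'" by (rule finite_permutations, simp)+
  have inner: "(\<lambda>\<pi>. \<Sum>\<beta>\<in>?P'. (if conc m \<alpha> \<beta> = \<pi> then 1 else 0) * d \<beta>) \<in> vspan (m+m')" if "\<alpha> \<in> ?P" for \<alpha>
    by (rule vspan_lin[OF fP(2) _ d]) (use right_gen that vspan_gen in blast)
  have "(\<lambda>\<pi>. \<Sum>\<alpha>\<in>?P. a \<alpha> * (\<Sum>\<beta>\<in>?P'. (if conc m \<alpha> \<beta> = \<pi> then 1 else 0) * d \<beta>)) \<in> vspan (m+m')"
    by (rule vspan_sum[OF fP(1)], rule vspan_smult, rule inner)
  moreover have "cprod m m' a d = (\<lambda>\<pi>. \<Sum>\<alpha>\<in>?P. a \<alpha> * (\<Sum>\<beta>\<in>?P'. (if conc m \<alpha> \<beta> = \<pi> then 1 else 0) * d \<beta>))"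
    unfolding cprod_alt sum_distrib_left by (intro ext sum.cong refl) (simp add: ac_simps)
  ultimately show ?thesis by simp
qed

lemma part3:
  assumes "hequiv m a a'" "hequiv m' b b'"
  shows "hequiv (m + m') (cprod m m' a b) (cprod m m' a' b')"
proof -
  have 1: "cprod m m' (\<lambda>x. a x - a' x) b \<in> vspan (m+m')"
    using assms(1) cprod_left_vspan unfolding hequiv_def by blast
  have 2: "cprod m m' a' (\<lambda>x. b x - b' x) \<in> vspan (m+m')"
    using assms(2) cprod_right_vspan unfolding hequiv_def by blast
  have "(\<lambda>\<pi>. cprod m m' (\<lambda>x. a x - a' x) b \<pi> + cprod m m' a' (\<lambda>x. b x - b' x) \<pi>) \<in> vspan (m+m')"
    using vspan_add[OF 1 2] .
  moreover have "(\<lambda>\<pi>. cprod m m' (\<lambda>x. a x - a' x) b \<pi> + cprod m m' a' (\<lambda>x. b x - b' x) \<pi>)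
      = (\<lambda>\<pi>. cprod m m' a b \<pi> - cprod m m' a' b' \<pi>)"
    unfolding cprod_alt sum_subtractf[symmetric] sum.distrib[symmetric]
    by (intro ext sum.cong refl) (simp add: algebra_simps)
  ultimately show ?thesis unfolding hequiv_def by simp
qed

lemma cprod_delta:
  assumes a: "\<alpha> permutes {1..m}" and b: "\<beta> permutes {1..m'}"
  shows "cprod m m' (delta \<alpha>) (delta \<beta>) = delta (conc m \<alpha> \<beta>)"
proof
  fix \<pi>
  let ?P = "{\<alpha>. \<alpha> permutes {1..m}}"
  let ?P' = "{\<beta>. \<beta> permutes {1..m'}}"
  have fP: "finite ?P" "finite ?P'" by (rule finite_permutations, simp)+
  have "cprod m m' (delta \<alpha>) (delta \<beta>) \<pi> = (\<Sum>x\<in>?P. \<Sum>y\<in>?P'. ((if conc m x y = \<pi> then 1 else 0) * delta \<alpha> x) * delta \<beta> y)"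
    by (simp add: cprod_alt)
  also have "\<dots> = (\<Sum>x\<in>?P. (if conc m x \<beta> = \<pi> then 1 else 0) * delta \<alpha> x)"
    using sum_delta_pick[OF fP(2), of \<beta>] b by simp
  also have "\<dots> = (if conc m \<alpha> \<beta> = \<pi> then 1 else 0)"
    using sum_delta_pick[OF fP(1), of \<alpha>] a by simp
  finally show "cprod m m' (delta \<alpha>) (delta \<beta>) \<pi> = delta (conc m \<alpha> \<beta>) \<pi>" by (auto simp: delta_def)
qed

lemma my_permutes_funpow: assumes pS: "p permutes S" shows "(p ^^ n) permutes S"
proof (induction n)
  case 0 then show ?case by (simp add: permutes_def)
next
  case (Suc n)
  have "p \<circ> (p ^^ n) permutes S" by (rule permutes_compose[OF Suc.IH pS])
  then show ?case by (simp only: funpow.simps(2))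
qed

lemma sigma_permutes: "sigma m permutes {1..m}"
proof (rule perm_intro)
  show "sigma m ` {1..m} \<subseteq> {1..m}" by (auto simp: sigma_def)
  show "inj_on (sigma m) {1..m}" by (auto simp: sigma_def inj_on_def split: if_splits)
  show "\<And>x. x \<notin> {1..m} \<Longrightarrow> sigma m x = x" by (auto simp: sigma_def)
qed simp

lemma inv_sigma_1: "1 \<le> m \<Longrightarrow> inv (sigma m) 1 = m"
  using permutes_inv_eq[OF sigma_permutes] by (simp add: sigma_def)

lemma inv_sigma_ge2: "2 \<le> y \<Longrightarrow> y \<le> m \<Longrightarrow> inv (sigma m) y = y - 1"
proof -
  assume "2 \<le> y" "y \<le> m"
  then have "sigma m (y-1) = y" by (auto simp: sigma_def)
  then show ?thesis using permutes_inv_eq[OF sigma_permutes] by blast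
qed

lemma inv_sigma_out: "y \<notin> {1..m} \<Longrightarrow> inv (sigma m) y = y"
  using permutes_inv_eq[OF sigma_permutes] by (auto simp: sigma_def)

lemma gamma_perm:
  assumes a: "\<alpha> permutes {1..m::nat}" and m2: "2 \<le> m"
  shows "(\<lambda>r. if r \<in> {1..m-1} then (if \<alpha> (r+1) = 1 then \<alpha> 1 - 1 else \<alpha> (r+1) - 1) else r) permutes {1..m-1}"
    (is "?g permutes _")
proof (rule perm_intro)
  have ai: "\<And>i. \<alpha> i \<in> {1..m} \<longleftrightarrow> i \<in> {1..m}" using permutes_in_image[OF a] by blast
  have aj: "\<And>x y. \<alpha> x = \<alpha> y \<longleftrightarrow> x = y" using permutes_inj[OF a] by (auto simp: inj_eq)
  have a1: "\<alpha> 1 \<in> {1..m}" using ai[of 1] m2 by auto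
  show "?g ` {1..m-1} \<subseteq> {1..m-1}"
  proof
    fix y assume "y \<in> ?g ` {1..m-1}"
    then obtain r where r: "r \<in> {1..m-1}" "y = ?g r" by blast
    show "y \<in> {1..m-1}"
    proof (cases "\<alpha> (r+1) = 1")
      case True
      then have "\<alpha> 1 \<noteq> 1" using r aj[of 1 "r+1"] by auto
      moreover have "y = \<alpha> 1 - 1" using r True by simp
      ultimately show ?thesis using a1 by auto
    next
      case False
      have "r + 1 \<in> {1..m}" using r(1) by auto
      then have "\<alpha> (r+1) \<in> {1..m}" using ai[of "r+1"] by blast
      moreover have "y = \<alpha> (r+1) - 1" using r False by simp
      ultimately show ?thesis using False by auto
    qed
  qed
  show "inj_on ?g {1..m-1}"
  proof (rule inj_onI)
    fix r s assume r: "r \<in> {1..m-1}" and s: "s \<in> {1..m-1}" and e: "?g r = ?g s"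
    have "r + 1 \<in> {1..m}" "s + 1 \<in> {1..m}" using r s by auto
    then have ar: "\<alpha> (r+1) \<in> {1..m}" "\<alpha> (s+1) \<in> {1..m}" using ai[of "r+1"] ai[of "s+1"] by blast+
    show "r = s"
    proof (cases "\<alpha> (r+1) = 1"; cases "\<alpha> (s+1) = 1")
      assume "\<alpha> (r+1) = 1" "\<alpha> (s+1) = 1" then show ?thesis using aj[of "r+1" "s+1"] by simp
    next
      assume c: "\<alpha> (r+1) = 1" "\<alpha> (s+1) \<noteq> 1"
      then have "\<alpha> 1 - 1 = \<alpha> (s+1) - 1" using e r s by simp
      then have "\<alpha> 1 = \<alpha> (s+1)" using a1 ar c by auto
      then show ?thesis using aj[of 1 "s+1"] s by auto
    next
      assume c: "\<alpha> (r+1) \<noteq> 1" "\<alpha> (s+1) = 1"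
      then have "\<alpha> 1 - 1 = \<alpha> (r+1) - 1" using e r s by simp
      then have "\<alpha> 1 = \<alpha> (r+1)" using a1 ar c by auto
      then show ?thesis using aj[of 1 "r+1"] r by auto
    next
      assume c: "\<alpha> (r+1) \<noteq> 1" "\<alpha> (s+1) \<noteq> 1"
      then have "\<alpha> (r+1) - 1 = \<alpha> (s+1) - 1" using e r s by simp
      then have "\<alpha> (r+1) = \<alpha> (s+1)" using ar c by auto
      then show ?thesis using aj[of "r+1" "s+1"] by simp
    qed
  qed
  show "\<And>x. x \<notin> {1..m-1} \<Longrightarrow> ?g x = x" by auto
qed simp

lemma rot_step:
  assumes a: "\<alpha> permutes {1..m}"
  shows "(\<lambda>\<pi>. delta \<alpha> \<pi> - delta (inv (sigma m) \<circ> \<alpha> \<circ> sigma m) \<pi>) \<in> vspan m"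
proof (cases "m < 2")
  case True
  have "sigma m = id" using True by (auto simp: sigma_def)
  then show ?thesis using vspan.zero by simp
next
  case False
  then have m2: "2 \<le> m" by simp
  have ai: "\<And>i. \<alpha> i \<in> {1..m} \<longleftrightarrow> i \<in> {1..m}" using permutes_in_image[OF a] by blast
  have ao: "\<And>i. i \<notin> {1..m} \<Longrightarrow> \<alpha> i = i" using a by (simp add: permutes_not_in)
  have aj: "\<And>x y. \<alpha> x = \<alpha> y \<longleftrightarrow> x = y" using permutes_inj[OF a] by (auto simp: inj_eq)
  have ainv: "\<And>x y. inv \<alpha> y = x \<longleftrightarrow> \<alpha> x = y" using permutes_inv_eq[OF a] .
  define q where "q = (if \<alpha> 1 = 1 then None else Some (inv \<alpha> 1 - 1))"
  define \<gamma> where "\<gamma> = (\<lambda>r. if r \<in> {1..m-1} then (if \<alpha> (r+1) = 1 then \<alpha> 1 - 1 else \<alpha> (r+1) - 1) else r)"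
  have a1: "\<alpha> 1 \<in> {1..m}" using ai[of 1] m2 by auto
  have qS: "q = Some r \<longleftrightarrow> r \<in> {1..m-1} \<and> \<alpha> (r+1) = 1" for r
  proof
    assume r: "r \<in> {1..m-1} \<and> \<alpha> (r+1) = 1"
    then have "inv \<alpha> 1 = r + 1" using ainv by blast
    moreover have "\<alpha> 1 \<noteq> 1" using r aj[of 1 "r+1"] by auto
    ultimately show "q = Some r" by (simp add: q_def)
  next
    assume qr: "q = Some r"
    then have n1: "\<alpha> 1 \<noteq> 1" by (auto simp: q_def split: if_splits)
    then have r: "r = inv \<alpha> 1 - 1" using qr by (simp add: q_def)
    define p where "p = inv \<alpha> 1"
    have ap: "\<alpha> p = 1" using ainv p_def by blast
    have "p \<noteq> 1" using ap n1 by auto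
    moreover have "p \<in> {1..m}"
    proof (rule ccontr)
      assume "p \<notin> {1..m}"
      then have "\<alpha> p = p" using ao by blast
      then show False using ap \<open>p \<noteq> 1\<close> by simp
    qed
    ultimately show "r \<in> {1..m-1} \<and> \<alpha> (r+1) = 1" using r ap p_def by auto
  qed
  have qN: "q = None \<longleftrightarrow> \<alpha> 1 = 1" by (simp add: q_def)
  have qv: "case q of None \<Rightarrow> True | Some q' \<Rightarrow> q' \<in> {1..m - 1}"
    using qS by (auto split: option.splits)
  have g: "\<gamma> permutes {1..m-1}" unfolding \<gamma>_def by (rule gamma_perm[OF a m2])
  let ?A = "vas_alpha m \<gamma> q"
  have m1: "1 \<le> m" using m2 by simp
  have A0: "?A 0 = \<alpha>"
  proof
    fix p
    have t0: "(0::nat) \<le> m - 1" by simp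
    show "?A 0 p = \<alpha> p"
    proof (cases "p \<in> {1..m}")
      case False then show ?thesis using ao by (auto simp: vas_alpha_def)
    next
      case pin: True
      show ?thesis
      proof (cases "p = 0 + 1")
        case True
        have "?A 0 p = (case q of None \<Rightarrow> 0+1 | Some q' \<Rightarrow> ins_lbl 0 (\<gamma> q'))"
          unfolding True by (rule va_t[OF t0 m1])
        also have "\<dots> = \<alpha> 1"
        proof (cases q)
          case None then show ?thesis using qN by simp
        next
          case (Some q')
          then have "q' \<in> {1..m-1}" "\<alpha> (q'+1) = 1" using qS by auto
          moreover have "\<alpha> 1 \<noteq> 1" using Some qN by auto
          ultimately show ?thesis using Some a1 by (auto simp: \<gamma>_def ins_lbl_def)
        qed
        finally show ?thesis using True by simp
      next
        case False
        then obtain r where r: "r \<in> {1..m-1}" "p = ins_lbl 0 r" using ins_decomp[OF pin False t0] by blast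
        have pr: "p = r + 1" using r by (simp add: ins_lbl_def)
        have "?A 0 p = (if q = Some r then 0+1 else ins_lbl 0 (\<gamma> r))" using va_ins[OF r(1) t0] r(2) by simp
        also have "\<dots> = \<alpha> p"
        proof (cases "\<alpha> (r+1) = 1")
          case True then show ?thesis using qS r pr by simp
        next
          case c: False
          have "r + 1 \<in> {1..m}" using r(1) by auto
          then have "\<alpha> (r+1) \<in> {1..m}" using ai[of "r+1"] by blast
          then show ?thesis using qS r pr c by (auto simp: \<gamma>_def ins_lbl_def)
        qed
        finally show ?thesis .
      qed
    qed
  qed
  have Am: "?A (m-1) = inv (sigma m) \<circ> \<alpha> \<circ> sigma m"
  proof
    fix p
    have t0: "m - 1 \<le> m - 1" by simp
    show "?A (m-1) p = (inv (sigma m) \<circ> \<alpha> \<circ> sigma m) p"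
    proof (cases "p \<in> {1..m}")
      case False
      have sp: "sigma m p = p" using False by (auto simp: sigma_def)
      have ap: "\<alpha> p = p" using False ao by blast
      have ip: "inv (sigma m) p = p" using False inv_sigma_out by blast
      have "?A (m-1) p = p" using False by (auto simp: vas_alpha_def)
      then show ?thesis using sp ap ip by simp
    next
      case pin: True
      show ?thesis
      proof (cases "p = (m-1) + 1")
        case True
        then have pm: "p = m" using m2 by simp
        have "?A (m-1) p = (case q of None \<Rightarrow> m-1+1 | Some q' \<Rightarrow> ins_lbl (m-1) (\<gamma> q'))"
          unfolding True by (rule va_t[OF t0 m1])
        also have "\<dots> = inv (sigma m) (\<alpha> 1)"
        proof (cases q)
          case None then show ?thesis using qN inv_sigma_1[OF m1] m2 by simp
        next
          case (Some q')
          then have "q' \<in> {1..m-1}" "\<alpha> (q'+1) = 1" using qS by auto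
          moreover have "\<alpha> 1 \<noteq> 1" using Some qN by auto
          ultimately have g1: "\<gamma> q' = \<alpha> 1 - 1" and a2: "2 \<le> \<alpha> 1" using a1 by (auto simp: \<gamma>_def)
          have i1: "ins_lbl (m-1) (\<alpha> 1 - 1) = \<alpha> 1 - 1" using a1 by (auto simp: ins_lbl_def)
          have i2: "inv (sigma m) (\<alpha> 1) = \<alpha> 1 - 1" using inv_sigma_ge2[OF a2] a1 by auto
          show ?thesis using Some g1 i1 i2 by simp
        qed
        also have "\<dots> = (inv (sigma m) \<circ> \<alpha> \<circ> sigma m) p" using pm m2 by (simp add: sigma_def)
        finally show ?thesis .
      next
        case False
        then obtain r where r: "r \<in> {1..m-1}" "p = ins_lbl (m-1) r" using ins_decomp[OF pin False t0] by blast
        have pr: "p = r" using r(1) r(2) by (simp add: ins_lbl_def)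
        have sr: "sigma m r = r + 1" using r(1) by (auto simp: sigma_def)
        have "?A (m-1) p = (if q = Some r then m-1+1 else ins_lbl (m-1) (\<gamma> r))" using va_ins[OF r(1) t0] r(2) by simp
        also have "\<dots> = inv (sigma m) (\<alpha> (r+1))"
        proof (cases "\<alpha> (r+1) = 1")
          case True
          have qs: "q = Some r" using qS r(1) True by blast
          show ?thesis using qs True inv_sigma_1[OF m1] m2 by simp
        next
          case c: False
          have "r + 1 \<in> {1..m}" using r(1) by auto
          then have "\<alpha> (r+1) \<in> {1..m}" using ai[of "r+1"] by blast
          then have a2: "2 \<le> \<alpha> (r+1)" "\<alpha> (r+1) \<le> m" using c by auto
          have qn: "q \<noteq> Some r" using qS c by blast
          have g1: "\<gamma> r = \<alpha> (r+1) - 1" using r(1) c by (simp add: \<gamma>_def)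
          have i1: "ins_lbl (m-1) (\<alpha> (r+1) - 1) = \<alpha> (r+1) - 1" using a2 by (auto simp: ins_lbl_def)
          have i2: "inv (sigma m) (\<alpha> (r+1)) = \<alpha> (r+1) - 1" using inv_sigma_ge2[OF a2] .
          show ?thesis using qn g1 i1 i2 by simp
        qed
        also have "\<dots> = (inv (sigma m) \<circ> \<alpha> \<circ> sigma m) p" using pr sr by simp
        finally show ?thesis .
      qed
    qed
  qed
  let ?O = "(\<lambda>j. {(\<gamma> ^^ n) j | n. True}) ` {1..m-1}"
  have inV: "(\<lambda>\<pi>. \<Sum>v\<in>?O. vas_elem m \<gamma> q v \<pi>) \<in> vspan m"
  proof (rule vspan_sum)
    show "finite ?O" by simp
    fix v assume "v \<in> ?O"
    then obtain j0 where j0: "j0 \<in> {1..m-1}" "v = {(\<gamma> ^^ n) j0 | n. True}" by blast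
    show "vas_elem m \<gamma> q v \<in> vspan m"
      by (rule vspan_gen, rule gen_intro[OF m2 g qv j0])
  qed
  have "(\<Sum>v\<in>?O. vas_elem m \<gamma> q v \<pi>) = delta \<alpha> \<pi> - delta (inv (sigma m) \<circ> \<alpha> \<circ> sigma m) \<pi>" for \<pi>
  proof -
    have "(\<Sum>v\<in>?O. vas_elem m \<gamma> q v \<pi>) = (\<Sum>v\<in>?O. \<Sum>j\<in>v. delta (?A (j-1)) \<pi> - delta (?A j) \<pi>)"
      by (simp add: vas_elem_def)
    also have "\<dots> = (\<Sum>j\<in>{1..m-1}. delta (?A (j-1)) \<pi> - delta (?A j) \<pi>)"
      by (rule orbit_partition_sum[OF g]) simp
    also have "\<dots> = delta (?A 0) \<pi> - delta (?A (m-1)) \<pi>"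
      by (rule telescope)
    finally show ?thesis using A0 Am by simp
  qed
  then show ?thesis using inV by simp
qed

lemma hequiv_refl: "hequiv m a a"
  unfolding hequiv_def using vspan.zero by simp

lemma hequiv_trans: "hequiv m a b \<Longrightarrow> hequiv m b c \<Longrightarrow> hequiv m a c"
  unfolding hequiv_def using vspan_add[of "\<lambda>\<pi>. a \<pi> - b \<pi>" m "\<lambda>\<pi>. b \<pi> - c \<pi>"] by simp

lemma cshift_Suc: "cshift m (Suc k) \<alpha> = inv (sigma m) \<circ> cshift m k \<alpha> \<circ> sigma m"
  unfolding cshift_def by (simp add: fun_eq_iff funpow_swap1)

lemma cshift_permutes: "\<alpha> permutes {1..m} \<Longrightarrow> cshift m k \<alpha> permutes {1..m}"
  unfolding cshift_def
  by (intro permutes_compose my_permutes_funpow sigma_permutes permutes_inv)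

lemma rot_equiv:
  assumes a: "\<alpha> permutes {1..m}"
  shows "hequiv m (delta \<alpha>) (delta (cshift m k \<alpha>))"
proof (induction k)
  case 0 then show ?case by (simp add: cshift_def hequiv_refl)
next
  case (Suc k)
  have "hequiv m (delta (cshift m k \<alpha>)) (delta (inv (sigma m) \<circ> cshift m k \<alpha> \<circ> sigma m))"
    unfolding hequiv_def by (rule rot_step[OF cshift_permutes[OF a]])
  then show ?case using Suc.IH hequiv_trans cshift_Suc by metis
qed

lemma delta_galg: "\<alpha> permutes {1..m} \<Longrightarrow> delta \<alpha> \<in> galg m"
  by (simp add: galg_def delta_def)

lemma part1:
  assumes "\<alpha> permutes {1..m}" "\<alpha>' permutes {1..m}" "\<beta> permutes {1..m'}" "\<beta>' permutes {1..m'}"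
    "hequiv m (delta \<alpha>) (delta \<alpha>')" "hequiv m' (delta \<beta>) (delta \<beta>')"
  shows "hequiv (m + m') (delta (conc m \<alpha> \<beta>)) (delta (conc m \<alpha>' \<beta>'))"
  using part3[OF assms(5,6)] cprod_delta[OF assms(1,3)] cprod_delta[OF assms(2,4)] by simp

theorem proposition14:
  fixes m m' :: nat
  shows
    "(\<forall>\<alpha> \<alpha>' \<beta> \<beta>'. \<alpha> permutes {1..m} \<longrightarrow> \<alpha>' permutes {1..m} \<longrightarrow>
        \<beta> permutes {1..m'} \<longrightarrow> \<beta>' permutes {1..m'} \<longrightarrow>
        hequiv m (delta \<alpha>) (delta \<alpha>') \<longrightarrow> hequiv m' (delta \<beta>) (delta \<beta>') \<longrightarrow>
        hequiv (m + m') (delta (conc m \<alpha> \<beta>)) (delta (conc m \<alpha>' \<beta>')))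
   \<and> (\<forall>\<alpha> \<beta> k l. \<alpha> permutes {1..m} \<longrightarrow> \<beta> permutes {1..m'} \<longrightarrow>
        hequiv (m + m') (delta (conc m \<alpha> \<beta>))
                        (delta (conc m (cshift m k \<alpha>) (cshift m' l \<beta>))))
   \<and> (\<forall>a a' b b'. a \<in> galg m \<longrightarrow> a' \<in> galg m \<longrightarrow> b \<in> galg m' \<longrightarrow> b' \<in> galg m' \<longrightarrow>
        hequiv m a a' \<longrightarrow> hequiv m' b b' \<longrightarrow>
        hequiv (m + m') (cprod m m' a b) (cprod m m' a' b'))"
proof (intro conjI allI impI)
  fix \<alpha> \<alpha>' \<beta> \<beta>'
  assume "\<alpha> permutes {1..m}" "\<alpha>' permutes {1..m}" "\<beta> permutes {1..m'}" "\<beta>' permutes {1..m'}"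
    "hequiv m (delta \<alpha>) (delta \<alpha>')" "hequiv m' (delta \<beta>) (delta \<beta>')"
  then show "hequiv (m + m') (delta (conc m \<alpha> \<beta>)) (delta (conc m \<alpha>' \<beta>'))" by (rule part1)
next
  fix \<alpha> \<beta> k l
  assume a: "\<alpha> permutes {1..m}" and b: "\<beta> permutes {1..m'}"
  show "hequiv (m + m') (delta (conc m \<alpha> \<beta>)) (delta (conc m (cshift m k \<alpha>) (cshift m' l \<beta>)))"
    by (rule part1[OF a cshift_permutes[OF a] b cshift_permutes[OF b] rot_equiv[OF a] rot_equiv[OF b]])
next
  fix a a' b b'
  assume "hequiv m a a'" "hequiv m' b b'"
  then show "hequiv (m + m') (cprod m m' a b) (cprod m m' a' b')" by (rule part3)
qed

end
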